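(* $C_3(82) = 7$.
   Context: For positive integers $m, r$, $C_m(r)$ is the minimum odd positive integer $n$ such that there exist vectors $v_1, \ldots, v_n \in \mathbb{Z}^m$ (not necessarily distinct) with $|v_i| = \sqrt{r}$ (Euclidean norm) for every $i$ and $v_1 + \cdots + v_n = \mathbf{0}$; if no such odd $n$ exists, $C_m(r) = 0$. *)

theory Defs
  imports Complex_Main
begin

text \<open>Vectors in Z^m are represented as integer lists of length m.
  Euclidean norm of an integer vector.\<close>
definition znorm :: "int list \<Rightarrow> real" where
  "znorm v = sqrt (\<Sum>x\<leftarrow>v. real_of_int x ^ 2)"

definition zero_sum_config :: "nat \<Rightarrow> nat \<Rightarrow> nat \<Rightarrow> bool" where
  "zero_sum_config m r n \<longleftrightarrow>
     (\<exists>v :: nat \<Rightarrow> int list.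
        (\<forall>i<n. length (v i) = m \<and> znorm (v i) = sqrt (real r)) \<and>
        (\<forall>j<m. (\<Sum>i<n. v i ! j) = 0))"

definition C :: "nat \<Rightarrow> nat \<Rightarrow> nat" where
  "C m r = (if \<exists>n. odd n \<and> 0 < n \<and> zero_sum_config m r n
            then (LEAST n. odd n \<and> 0 < n \<and> zero_sum_config m r n) else 0)"

end

theory Submission
  imports Defs
begin

definition nrm :: "int*int*int \<Rightarrow> int" where "nrm = (\<lambda>(x,y,z). x*x+y*y+z*z)"
definition add3 :: "int*int*int \<Rightarrow> int*int*int \<Rightarrow> int*int*int" where
 "add3 = (\<lambda>(a,b,c) (x,y,z). (a+x,b+y,c+z))"
definition L :: "(int*int*int) list" where
 "L = [(-9,-1,0), (-9,0,-1), (-9,0,1), (-9,1,0), (-8,-3,-3), (-8,-3,3), (-8,3,-3), (-8,3,3), (-3,-8,-3), (-3,-8,3), (-3,-3,-8), (-3,-3,8), (-3,3,-8), (-3,3,8), (-3,8,-3), (-3,8,3), (-1,-9,0), (-1,0,-9), (-1,0,9), (-1,9,0), (0,-9,-1), (0,-9,1), (0,-1,-9), (0,-1,9), (0,1,-9), (0,1,9), (0,9,-1), (0,9,1), (1,-9,0), (1,0,-9), (1,0,9), (1,9,0), (3,-8,-3), (3,-8,3), (3,-3,-8), (3,-3,8), (3,3,-8), (3,3,8), (3,8,-3), (3,8,3), (8,-3,-3), (8,-3,3), (8,3,-3), (8,3,3), (9,-1,0), (9,0,-1), (9,0,1), (9,1,0)]"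
definition NL :: "int list" where "NL = [0, 2, 4, 14, 26, 36, 50, 72, 86, 94, 104, 116, 126, 128, 146, 162, 164, 166, 182, 200, 202, 212, 224, 234, 242, 256, 278, 292, 302, 314, 324, 326, 328]"
definition chk where "chk w = list_all (\<lambda>p. list_all (\<lambda>q.
   let x = add3 w (add3 p q) in if nrm x \<in> set NL then list_all (\<lambda>u. nrm (add3 x u) \<noteq> 82) L else True) L) L"

lemma enum_L: "list_all (\<lambda>x. list_all (\<lambda>y. list_all (\<lambda>z. x*x+y*y+z*z = 82 \<longrightarrow> (x,y,z) \<in> set L) [-9..9]) [-9..9]) [-9..9]"
  by code_simp

lemma sq_bound: fixes x y z :: int assumes "x*x+y*y+z*z = 82" shows "-9 \<le> x \<and> x \<le> 9"
proof (rule ccontr)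
  assume "\<not> (-9 \<le> x \<and> x \<le> 9)"
  then have "10 \<le> \<bar>x\<bar>" by auto
  then have "100 \<le> \<bar>x\<bar> * \<bar>x\<bar>" using mult_mono[of 10 "\<bar>x\<bar>" 10 "\<bar>x\<bar>"] by auto
  moreover have "\<bar>x\<bar> * \<bar>x\<bar> = x * x" by (rule abs_mult_self_eq)
  moreover have "y*y \<ge> 0" "z*z \<ge> 0" by auto
  ultimately show False using assms by linarith
qed

lemma L_char: assumes "nrm t = 82" shows "t \<in> set L"
proof -
  obtain x y z where t: "t = (x,y,z)" by (cases t) auto
  have e: "x*x+y*y+z*z = 82" using assms t by (simp add: nrm_def)
  have U: "\<And>a::int. -9 \<le> a \<and> a \<le> 9 \<Longrightarrow> a \<in> set [-9..9]" by (simp only: set_upto) simp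
  have e2: "y*y+x*x+z*z = 82" "z*z+x*x+y*y = 82" using e by linarith+
  have hx: "x \<in> set [-9..9]" using U sq_bound[OF e] by blast
  have hy: "y \<in> set [-9..9]" using U sq_bound[OF e2(1)] by blast
  have hz: "z \<in> set [-9..9]" using U sq_bound[OF e2(2)] by blast
  have A: "\<forall>x\<in>set [-9..9]. \<forall>y\<in>set [-9..9]. \<forall>z\<in>set [-9..9]. x*x+y*y+z*z = 82 \<longrightarrow> (x,y,z) \<in> set L"
    using enum_L by (simp only: list_all_iff)
  have "x*x+y*y+z*z = 82 \<longrightarrow> (x,y,z) \<in> set L" using bspec[OF bspec[OF bspec[OF A hx] hy] hz] .
  then show ?thesis using e t by blast
qed

lemma pairs_NL: "list_all (\<lambda>u. list_all (\<lambda>u'. nrm (add3 u u') \<in> set NL) L) L" by code_simp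
lemma pairs3: "list_all (\<lambda>u. list_all (\<lambda>u'. nrm (add3 u u') \<noteq> 82) L) L" by code_simp
lemma chk1: "chk (9,1,0)" by code_simp
lemma chk2: "chk (8,3,3)" by code_simp

definition bad :: "int*int*int \<Rightarrow> bool" where
  "bad w \<longleftrightarrow> (\<exists>p q u. nrm p = 82 \<and> nrm q = 82 \<and> nrm u = 82 \<and> nrm (add3 w (add3 p (add3 q u))) = 82)"

lemma chk_sound: assumes "chk w" shows "\<not> bad w"
proof
  assume "bad w"
  then obtain p q u where pqu: "nrm p = 82" "nrm q = 82" "nrm u = 82"
     and h: "nrm (add3 w (add3 p (add3 q u))) = 82" unfolding bad_def by blast
  define x where "x = add3 w (add3 p q)"
  have hx: "nrm (add3 x u) = 82" using h unfolding x_def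
    by (cases w; cases p; cases q; cases u) (simp add: add3_def algebra_simps)
  obtain x1 x2 x3 where xx: "x = (x1,x2,x3)" by (cases x) auto
  obtain u1 u2 u3 where uu: "u = (u1,u2,u3)" by (cases u) auto
  define u' where "u' = (-x1-u1, -x2-u2, -x3-u3)"
  have "nrm u' = 82" using hx unfolding u'_def xx uu by (simp add: nrm_def add3_def algebra_simps)
  then have "u' \<in> set L" by (rule L_char)
  moreover have "u \<in> set L" using pqu by (simp add: L_char)
  ultimately have "nrm (add3 u u') \<in> set NL" using pairs_NL by (simp add: list_all_iff)
  moreover have "nrm (add3 u u') = nrm x" unfolding u'_def xx uu by (simp add: nrm_def add3_def algebra_simps)
  ultimately have "nrm x \<in> set NL" by simp
  moreover have "p \<in> set L" "q \<in> set L" using pqu by (simp_all add: L_char)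
  moreover have c: "\<forall>p\<in>set L. \<forall>q\<in>set L. (let x = add3 w (add3 p q) in if nrm x \<in> set NL then list_all (\<lambda>u. nrm (add3 x u) \<noteq> 82) L else True)"
    using assms unfolding chk_def by (simp only: list_all_iff)
  ultimately have "if nrm x \<in> set NL then list_all (\<lambda>u. nrm (add3 x u) \<noteq> 82) L else True"
    unfolding x_def Let_def by blast
  then have "list_all (\<lambda>u. nrm (add3 x u) \<noteq> 82) L" using \<open>nrm x \<in> set NL\<close> by simp
  then have "nrm (add3 x u) \<noteq> 82" using \<open>u \<in> set L\<close> by (simp add: list_all_iff)
  then show False using hx by simp
qed

lemma bad_map:
  assumes add: "\<And>a b. g (add3 a b) = add3 (g a) (g b)" and n: "\<And>a. nrm (g a) = nrm a"
    and "bad w" shows "bad (g w)"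
proof -
  obtain p q u where pqu: "nrm p = 82" "nrm q = 82" "nrm u = 82"
     and h: "nrm (add3 w (add3 p (add3 q u))) = 82" using \<open>bad w\<close> unfolding bad_def by blast
  show ?thesis unfolding bad_def
    apply (rule exI[of _ "g p"], rule exI[of _ "g q"], rule exI[of _ "g u"])
    using pqu h by (simp add: n flip: add)
qed

lemma neg1: "bad (x,y,z) \<Longrightarrow> bad (-x,y,z)"
  using bad_map[of "\<lambda>(a,b,c). (-a,b,c)" "(x,y,z)"] by (force simp: add3_def nrm_def split: prod.splits)
lemma neg2: "bad (x,y,z) \<Longrightarrow> bad (x,-y,z)"
  using bad_map[of "\<lambda>(a,b,c). (a,-b,c)" "(x,y,z)"] by (force simp: add3_def nrm_def split: prod.splits)
lemma neg3: "bad (x,y,z) \<Longrightarrow> bad (x,y,-z)"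
  using bad_map[of "\<lambda>(a,b,c). (a,b,-c)" "(x,y,z)"] by (force simp: add3_def nrm_def split: prod.splits)
lemma sw12: "bad (x,y,z) \<Longrightarrow> bad (y,x,z)"
  using bad_map[of "\<lambda>(a,b,c). (b,a,c)" "(x,y,z)"] by (force simp: add3_def nrm_def algebra_simps split: prod.splits)
lemma sw13: "bad (x,y,z) \<Longrightarrow> bad (z,y,x)"
  using bad_map[of "\<lambda>(a,b,c). (c,b,a)" "(x,y,z)"] by (force simp: add3_def nrm_def algebra_simps split: prod.splits)
lemma sw23: "bad (x,y,z) \<Longrightarrow> bad (x,z,y)"
  using bad_map[of "\<lambda>(a,b,c). (a,c,b)" "(x,y,z)"] by (force simp: add3_def nrm_def algebra_simps split: prod.splits)


lemma bad_abs: assumes "bad (x,y,z)" shows "bad (\<bar>x\<bar>,\<bar>y\<bar>,\<bar>z\<bar>)"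
proof -
  have 1: "bad (\<bar>x\<bar>,y,z)" using assms neg1[of x y z] by (cases "x \<ge> 0") auto
  have 2: "bad (\<bar>x\<bar>,\<bar>y\<bar>,z)" using 1 neg2[of "\<bar>x\<bar>" y z] by (cases "y \<ge> 0") auto
  show ?thesis using 2 neg3[of "\<bar>x\<bar>" "\<bar>y\<bar>" z] by (cases "z \<ge> 0") auto
qed

lemma nonneg_L: "list_all (\<lambda>(a,b,c). a \<ge> 0 \<and> b \<ge> 0 \<and> c \<ge> 0 \<longrightarrow>
   (a,b,c) \<in> set [(0,1,9),(0,9,1),(1,0,9),(1,9,0),(9,0,1),(9,1,0),(3,3,8),(3,8,3),(8,3,3)]) L"
  by code_simp

lemma nine: "t \<in> set [(0,1,9),(0,9,1),(1,0,9),(1,9,0),(9,0,1),(9,1,0),(3,3,8),(3,8,3),(8,3,3)] \<Longrightarrow> bad t \<Longrightarrow>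
  bad (0,1,9) \<or> bad (0,9,1) \<or> bad (1,0,9) \<or> bad (1,9,0) \<or> bad (9,0,1) \<or> bad (9,1,0) \<or> bad (3,3,8) \<or> bad (3,8,3) \<or> bad (8,3,3)"
  by (simp only: set_simps insert_iff empty_iff) blast

lemma notbad_L: assumes "w \<in> set L" shows "\<not> bad w"
proof
  assume b: "bad w"
  obtain x y z where w: "w = (x,y,z)" by (cases w) auto
  have b1: "bad (\<bar>x\<bar>,\<bar>y\<bar>,\<bar>z\<bar>)" using bad_abs[of x y z] b unfolding w by blast
  have "nrm w = 82"
  proof -
    have "list_all (\<lambda>t. nrm t = 82) L" by code_simp
    then show ?thesis using assms by (simp add: list_all_iff)
  qed
  then have "x*x+y*y+z*z = 82" using w by (simp add: nrm_def)
  moreover have "\<bar>x\<bar>*\<bar>x\<bar> = x*x" "\<bar>y\<bar>*\<bar>y\<bar> = y*y" "\<bar>z\<bar>*\<bar>z\<bar> = z*z" by (rule abs_mult_self_eq)+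
  ultimately have "\<bar>x\<bar>*\<bar>x\<bar>+\<bar>y\<bar>*\<bar>y\<bar>+\<bar>z\<bar>*\<bar>z\<bar> = 82" by linarith
  then have "nrm (\<bar>x\<bar>,\<bar>y\<bar>,\<bar>z\<bar>) = 82" unfolding nrm_def by (simp only: prod.case)
  then have mem: "(\<bar>x\<bar>,\<bar>y\<bar>,\<bar>z\<bar>) \<in> set L" by (rule L_char)
  have N: "\<forall>t\<in>set L. (\<lambda>(a,b,c). a \<ge> 0 \<and> b \<ge> 0 \<and> c \<ge> 0 \<longrightarrow>
   (a,b,c) \<in> set [(0::int,1::int,9::int),(0,9,1),(1,0,9),(1,9,0),(9,0,1),(9,1,0),(3,3,8),(3,8,3),(8,3,3)]) t"
    using nonneg_L by (simp only: list_all_iff)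
  have "(\<lambda>(a,b,c). a \<ge> 0 \<and> b \<ge> 0 \<and> c \<ge> 0 \<longrightarrow>
   (a,b,c) \<in> set [(0::int,1::int,9::int),(0,9,1),(1,0,9),(1,9,0),(9,0,1),(9,1,0),(3,3,8),(3,8,3),(8,3,3)]) (\<bar>x\<bar>,\<bar>y\<bar>,\<bar>z\<bar>)"
    using bspec[OF N mem] .
  then have m: "(\<bar>x\<bar>,\<bar>y\<bar>,\<bar>z\<bar>) \<in> set [(0,1,9),(0,9,1),(1,0,9),(1,9,0),(9,0,1),(9,1,0),(3,3,8),(3,8,3),(8,3,3)]"
    by (simp only: prod.case abs_ge_zero simp_thms)
  have d: "bad (0,1,9) \<or> bad (0,9,1) \<or> bad (1,0,9) \<or> bad (1,9,0) \<or> bad (9,0,1) \<or> bad (9,1,0) \<or> bad (3,3,8) \<or> bad (3,8,3) \<or> bad (8,3,3)"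
    using nine[OF m b1] .
  have r: "bad (9,1,0) \<or> bad (8,3,3)"
    using d sw13[of 0 1 9] sw13[of 0 9 1] sw12[of 1 9 0] sw13[of 1 0 9] sw23[of 9 0 1]
      sw12[of 9 1 0] sw13[of 3 3 8] sw12[of 3 8 3] by blast
  then show False using chk_sound[OF chk1] chk_sound[OF chk2] by blast
qed

lemma len3: "length xs = 3 \<Longrightarrow> xs = [xs!0, xs!1, xs!2]"
  by (auto simp: numeral_3_eq_3 length_Suc_conv)

lemma cfg:
  assumes "zero_sum_config 3 82 n"
  shows "\<exists>x y z :: nat \<Rightarrow> int. (\<forall>i<n. x i*x i + y i*y i + z i*z i = 82) \<and>
     (\<Sum>i<n. x i) = 0 \<and> (\<Sum>i<n. y i) = 0 \<and> (\<Sum>i<n. z i) = 0"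
proof -
  obtain v :: "nat \<Rightarrow> int list" where v1: "\<forall>i<n. length (v i) = 3 \<and> znorm (v i) = sqrt (real 82)"
    and v2: "\<forall>j<3. (\<Sum>i<n. v i ! j) = 0"
    using assms unfolding zero_sum_config_def by blast
  have "\<forall>i<n. v i!0 * v i!0 + v i!1 * v i!1 + v i!2 * v i!2 = 82"
  proof (intro allI impI)
    fix i assume i: "i < n"
    have "length (v i) = 3" using v1 i by blast
    then obtain a b c where l: "v i = [a,b,c]" by (auto simp: numeral_3_eq_3 length_Suc_conv)
    have "znorm (v i) = sqrt (real 82)" using v1 i by blast
    then have "sqrt (real_of_int a^2 + (real_of_int b^2 + real_of_int c^2)) = sqrt 82"
      unfolding l znorm_def by simp
    then have "real_of_int a^2 + (real_of_int b^2 + real_of_int c^2) = 82"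
      by (simp only: real_sqrt_eq_iff)
    then have "real_of_int (a*a + b*b + c*c) = real_of_int 82"
      by (simp add: power2_eq_square)
    then have "a*a + b*b + c*c = 82" by (rule of_int_eq_iff[THEN iffD1])
    then show "v i!0 * v i!0 + v i!1 * v i!1 + v i!2 * v i!2 = 82" unfolding l by simp
  qed
  moreover have "(\<Sum>i<n. v i!0) = 0" "(\<Sum>i<n. v i!1) = 0" "(\<Sum>i<n. v i!2) = 0" using v2 by auto
  ultimately have H: "(\<forall>i<n. v i!0 * v i!0 + v i!1 * v i!1 + v i!2 * v i!2 = 82) \<and>
     (\<Sum>i<n. v i!0) = 0 \<and> (\<Sum>i<n. v i!1) = 0 \<and> (\<Sum>i<n. v i!2) = 0" by blast
  show ?thesis
    apply (rule exI[of _ "\<lambda>i. v i ! 0"])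
    apply (rule exI[of _ "\<lambda>i. v i ! 1"])
    apply (rule exI[of _ "\<lambda>i. v i ! 2"])
    using H by simp
qed

lemma no1: "\<not> zero_sum_config 3 82 1"
proof
  assume "zero_sum_config 3 82 1"
  then obtain x y z :: "nat \<Rightarrow> int" where h: "\<forall>i<1. x i*x i + y i*y i + z i*z i = 82"
     "(\<Sum>i<1. x i) = 0" "(\<Sum>i<1. y i) = 0" "(\<Sum>i<1. z i) = 0" using cfg by blast
  then show False by simp
qed

lemma no3: "\<not> zero_sum_config 3 82 3"
proof
  assume "zero_sum_config 3 82 3"
  then obtain x y z :: "nat \<Rightarrow> int" where h: "\<forall>i<3. x i*x i + y i*y i + z i*z i = 82"
     "(\<Sum>i<3. x i) = 0" "(\<Sum>i<3. y i) = 0" "(\<Sum>i<3. z i) = 0" using cfg by blast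
  have s: "x 0 + x 1 + x 2 = 0" "y 0 + y 1 + y 2 = 0" "z 0 + z 1 + z 2 = 0"
    using h(2-4) by (simp_all add: eval_nat_numeral)
  have n: "\<And>i. i < 3 \<Longrightarrow> (x i, y i, z i) \<in> set L" using h(1) by (simp add: L_char nrm_def)
  have a: "(x 0, y 0, z 0) \<in> set L" "(x 1, y 1, z 1) \<in> set L" using n by auto
  have "nrm (add3 (x 0, y 0, z 0) (x 1, y 1, z 1)) \<noteq> 82" using pairs3 a by (auto simp: list_all_iff)
  moreover have "x 0 + x 1 = - x 2" "y 0 + y 1 = - y 2" "z 0 + z 1 = - z 2" using s by linarith+
  moreover have "x 2*x 2 + y 2*y 2 + z 2*z 2 = 82" using h(1) by simp
  ultimately show False by (simp add: nrm_def add3_def)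
qed

lemma no5: "\<not> zero_sum_config 3 82 5"
proof
  assume "zero_sum_config 3 82 5"
  then obtain x y z :: "nat \<Rightarrow> int" where h: "\<forall>i<5. x i*x i + y i*y i + z i*z i = 82"
     "(\<Sum>i<5. x i) = 0" "(\<Sum>i<5. y i) = 0" "(\<Sum>i<5. z i) = 0" using cfg by blast
  have s: "x 0 + x 1 + x 2 + x 3 + x 4 = 0" "y 0 + y 1 + y 2 + y 3 + y 4 = 0" "z 0 + z 1 + z 2 + z 3 + z 4 = 0"
    using h(2-4) by (simp_all add: eval_nat_numeral)
  have n: "\<And>i. i < 5 \<Longrightarrow> nrm (x i, y i, z i) = 82" using h(1) by (simp add: nrm_def)
  have "(x 4, y 4, z 4) \<in> set L" using n[of 4] by (simp add: L_char)
  then have nb: "\<not> bad (x 4, y 4, z 4)" by (rule notbad_L)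
  have e: "x 4 + (x 0 + (x 1 + x 2)) = - x 3" "y 4 + (y 0 + (y 1 + y 2)) = - y 3" "z 4 + (z 0 + (z 1 + z 2)) = - z 3"
    using s by linarith+
  have "nrm (add3 (x 4, y 4, z 4) (add3 (x 0, y 0, z 0) (add3 (x 1, y 1, z 1) (x 2, y 2, z 2)))) = 82"
    using e n[of 3] by (simp add: nrm_def add3_def)
  note H = this
  have "nrm (x 0, y 0, z 0) = 82 \<and> nrm (x 1, y 1, z 1) = 82 \<and> nrm (x 2, y 2, z 2) = 82 \<and>
    nrm (add3 (x 4, y 4, z 4) (add3 (x 0, y 0, z 0) (add3 (x 1, y 1, z 1) (x 2, y 2, z 2)))) = 82"
    using n[of 0] n[of 1] n[of 2] H by simp
  then have "bad (x 4, y 4, z 4)" unfolding bad_def by blast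
  then show False using nb by simp
qed

definition sol :: "int list list" where
  "sol = [[-9,-1,0],[-9,-1,0],[-9,1,0],[3,-8,-3],[8,3,-3],[8,3,3],[8,3,3]]"

lemma yes7: "zero_sum_config 3 82 7"
  unfolding zero_sum_config_def
proof (rule exI[of _ "\<lambda>i. sol ! i"], rule conjI)
  show "\<forall>i<7. length (sol ! i) = 3 \<and> znorm (sol ! i) = sqrt (real 82)"
  proof (intro allI impI)
    fix i :: nat assume "i < 7"
    then have "i \<in> {0,1,2,3,4,5,6}" by auto
    then show "length (sol ! i) = 3 \<and> znorm (sol ! i) = sqrt (real 82)"
      by (auto simp: sol_def znorm_def)
  qed
  show "\<forall>j<3. (\<Sum>i<7. sol ! i ! j) = 0"
  proof (intro allI impI)
    fix j :: nat assume "j < 3"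
    then have "j \<in> {0,1,2}" by auto
    then show "(\<Sum>i<7. sol ! i ! j) = 0"
      by (auto simp: sol_def eval_nat_numeral)
  qed
qed

theorem theorem5:
  shows "C 3 82 = 7"
proof -
  have ex: "\<exists>n. odd n \<and> 0 < n \<and> zero_sum_config 3 82 n"
    using yes7 by (intro exI[of _ 7]) simp
  have "(LEAST n. odd n \<and> 0 < n \<and> zero_sum_config 3 82 n) = 7"
  proof (rule Least_equality)
    show "odd (7::nat) \<and> 0 < (7::nat) \<and> zero_sum_config 3 82 7" using yes7 by simp
  next
    fix m :: nat assume m: "odd m \<and> 0 < m \<and> zero_sum_config 3 82 m"
    show "7 \<le> m"
    proof (rule ccontr)
      assume "\<not> 7 \<le> m"
      then have "m < 7" by simp
      then have "m \<in> {0,1,2,3,4,5,6}" by auto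
      with m have "m = 1 \<or> m = 3 \<or> m = 5" by auto
      then show False using m no1 no3 no5 by blast
    qed
  qed
  then show ?thesis unfolding C_def using ex by simp
qed

end
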